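(* Let $G$ be a coloured graph with vertex set $V(G)=V(K_{\mathbb N})$ whose edge set is the (finite) set of edges coloured during the first $t\ge 0$ rounds of a game on $K_{\mathbb N}$ in which Builder selects edges and Painter colours them red or blue. Suppose $G$ is red-bipartite and $e$ is an edge of $K_{\mathbb N}$ not in $E(G)$ (selected by Builder in round $t+1$). Then $e$ can be coloured red or blue so that the resulting coloured graph $G'=G+e$ is red-bipartite and $f(G')\le f(G)+\varphi+1$.
   Context: $\varphi=(1+\sqrt5)/2$ is the golden ratio. A coloured graph is one in which every edge is red or blue. For $V'\subseteq V(G)$, $E[V']$ denotes the set of edges of $G$ with both ends in $V'$ ($E[\emptyset]=\emptyset$). A coloured graph $G$ is red-bipartite if there is a partition $V(G)=V_1\cup V_2$ (one part may be empty) such that no blue edge joins $V_1$ to $V_2$ and no red edge lies in $E[V_1]\cup E[V_2]$; such $(V_1,V_2)$ is a red-bipartition (equivalently, $G$ has no cycle with an odd number of red edges; each component has a red-bipartition unique up to swapping the parts). The potential $f$ is defined on coloured red-bipartite graphs with finitely many nontrivial components: if $G$ is an isolated vertex, $f(G)=0$; if $G$ is connected with at least two vertices and red-bipartition $(V_1,V_2)$, put $p_G(V_i)=\varphi|V_i|+|E[V_i]|$ for $i=1,2$, $a(G)=\max(p_G(V_1),p_G(V_2))$, $b(G)=\min(p_G(V_1),p_G(V_2))$, and $f(G)=\varphi a(G)-\varphi+\max(a(G)-\varphi^3,\,b(G))$; if $G$ has components $G_1,\dots,G_s$ (isolated vertices contributing $0$), then $f(G)=\sum_i f(G_i)$. 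*)

theory Defs
  imports Complex_Main
begin

text \<open>Coloured graphs on vertex set \<nat> (the vertex set of K_\<nat>): an edge set E of
  2-element subsets of nat, and the set R \<subseteq> E of red edges (E - R are the blue edges).\<close>

definition phi :: real where
  "phi = (1 + sqrt 5) / 2"

definition edges_in :: "nat set set \<Rightarrow> nat set \<Rightarrow> nat set set" where
  "edges_in E S = {e \<in> E. e \<subseteq> S}"

definition red_bip_on :: "nat set set \<Rightarrow> nat set set \<Rightarrow> nat set \<Rightarrow> bool" where
  "red_bip_on E R V1 \<longleftrightarrow> (\<forall>e\<in>E. e \<in> R \<longleftrightarrow> card (e \<inter> V1) = 1)"

definition red_bipartite :: "nat set set \<Rightarrow> nat set set \<Rightarrow> bool" where
  "red_bipartite E R \<longleftrightarrow> (\<exists>V1. red_bip_on E R V1)"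

definition adj :: "nat set set \<Rightarrow> nat \<Rightarrow> nat \<Rightarrow> bool" where
  "adj E u v \<longleftrightarrow> {u, v} \<in> E"

definition comp :: "nat set set \<Rightarrow> nat \<Rightarrow> nat set" where
  "comp E v = {u. (adj E)\<^sup>*\<^sup>* v u}"

definition nontriv_comps :: "nat set set \<Rightarrow> nat set set" where
  "nontriv_comps E = {comp E v | v. \<exists>e\<in>E. v \<in> e}"

definition pot :: "nat set set \<Rightarrow> nat set \<Rightarrow> real" where
  "pot E V = phi * real (card V) + real (card (edges_in E V))"

definition comp_f :: "nat set set \<Rightarrow> nat set set \<Rightarrow> nat set \<Rightarrow> real" where
  "comp_f E R C =
    (let V1 = (SOME V1. V1 \<subseteq> C \<and> red_bip_on (edges_in E C) R V1);
         V2 = C - V1;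
         a = max (pot E V1) (pot E V2);
         b = min (pot E V1) (pot E V2)
     in phi * a - phi + max (a - phi ^ 3) b)"

definition f :: "nat set set \<Rightarrow> nat set set \<Rightarrow> real" where
  "f E R = (\<Sum>C\<in>nontriv_comps E. comp_f E R C)"

end

theory Submission
  imports Defs
begin


lemma phi_sq: "phi * phi = phi + 1"
proof -
  have "sqrt 5 * sqrt 5 = 5" by simp
  then show ?thesis unfolding phi_def by (simp add: field_simps)
qed

lemma phi_gt: "phi > 1.6" "phi < 1.7"
proof -
  have "sqrt 5 > 2.2" by (rule real_less_rsqrt) (simp add: power2_eq_square)
  moreover have "sqrt 5 < 2.4" by (rule real_less_lsqrt) (auto simp add: power2_eq_square)
  ultimately show "phi > 1.6" "phi < 1.7" unfolding phi_def by auto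
qed

lemma phi_cube: "phi ^ 3 = 2 * phi + 1"
proof -
  have "phi ^ 3 = phi * (phi * phi)" by (simp add: power3_eq_cube)
  also have "\<dots> = 2 * phi + 1" using phi_sq by (simp add: algebra_simps)
  finally show ?thesis .
qed

definition gg :: "real \<Rightarrow> real \<Rightarrow> real" where
  "gg p q = phi * max p q - phi + max (max p q - phi ^ 3) (min p q)"

definition kk :: "real \<Rightarrow> real" where
  "kk x = max ((phi - 1) * x) ((phi + 1) * x - 4 * phi - 2)"

lemma gg_K: "gg p q = (phi + 1) / 2 * (p + q) + kk \<bar>p - q\<bar> / 2 - phi"
proof (cases "p \<le> q")
  case True
  then show ?thesis unfolding gg_def kk_def phi_cube
    by (auto simp add: max_def min_def abs_if field_simps)
next
  case False
  then show ?thesis unfolding gg_def kk_def phi_cube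
    by (auto simp add: max_def min_def abs_if field_simps)
qed

lemma kk_lb: "kk x \<ge> (phi - 1) * x" unfolding kk_def by simp

lemma kk_nonneg: "x \<ge> 0 \<Longrightarrow> kk x \<ge> 0"
proof -
  assume "x \<ge> 0"
  then have "(phi - 1) * x \<ge> 0" using phi_gt by simp
  then show ?thesis using kk_lb[of x] by linarith
qed

lemma kk_P2: assumes "x \<le> y" shows "kk y - kk x \<ge> (phi - 1) * (y - x)"
proof (cases "(phi - 1) * x \<ge> (phi + 1) * x - 4 * phi - 2")
  case True
  then have "kk x = (phi - 1) * x" unfolding kk_def by simp
  then show ?thesis using kk_lb[of y] by (simp add: algebra_simps)
next
  case False
  then have "kk x = (phi + 1) * x - 4 * phi - 2" unfolding kk_def by simp
  moreover have "kk y \<ge> (phi + 1) * y - 4 * phi - 2" unfolding kk_def by simp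
  ultimately show ?thesis using assms by (simp add: algebra_simps)
qed

lemma kk_P3: assumes "x \<le> y" shows "kk y - kk x \<le> (phi + 1) * (y - x)"
proof (cases "(phi - 1) * y \<ge> (phi + 1) * y - 4 * phi - 2")
  case True
  then have "kk y = (phi - 1) * y" unfolding kk_def by simp
  then show ?thesis using kk_lb[of x] assms by (simp add: algebra_simps)
next
  case False
  then have "kk y = (phi + 1) * y - 4 * phi - 2" unfolding kk_def by simp
  moreover have "kk x \<ge> (phi + 1) * x - 4 * phi - 2" unfolding kk_def by simp
  ultimately show ?thesis using assms by (simp add: algebra_simps)
qed

lemma kk_mono: assumes "x \<le> y" shows "kk x \<le> kk y"
proof -
  have "(phi - 1) * (y - x) \<ge> 0" using assms phi_gt by simp
  then show ?thesis using kk_P2[OF assms] by linarith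
qed

lemma key2:
  "kk \<bar>d1 - d2\<bar> \<le> kk \<bar>d1\<bar> + kk \<bar>d2\<bar> + 2 \<or> kk \<bar>d1 + d2 + 1\<bar> + phi + 1 \<le> kk \<bar>d1\<bar> + kk \<bar>d2\<bar> + 2"
proof -
  define x where "x = \<bar>d1\<bar>"
  define y where "y = \<bar>d2\<bar>"
  define M where "M = max x y"
  define m where "m = min x y"
  have sum: "kk \<bar>d1\<bar> + kk \<bar>d2\<bar> = kk M + kk m"
    unfolding M_def m_def x_def y_def by (simp add: max_def min_def)
  have m0: "m \<ge> 0" unfolding m_def x_def y_def by simp
  have mM: "m \<le> M" unfolding m_def M_def by simp
  show ?thesis
  proof (cases "d1 * d2 \<ge> 0")
    case True
    then have "(d1 \<ge> 0 \<and> d2 \<ge> 0) \<or> (d1 \<le> 0 \<and> d2 \<le> 0)" by (simp add: zero_le_mult_iff)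
    then have "\<bar>d1 - d2\<bar> \<le> M" unfolding M_def x_def y_def
      by (auto simp: max_def)
    then have "kk \<bar>d1 - d2\<bar> \<le> kk M" by (rule kk_mono)
    then show ?thesis using sum kk_nonneg[OF m0] by auto
  next
    case False
    show ?thesis
    proof (cases "m \<le> 1")
      case True
      have "\<bar>d1 - d2\<bar> \<le> M + m" using abs_triangle_ineq4[of d1 d2] unfolding M_def m_def x_def y_def by (auto simp add: max_def min_def)
      then have "kk \<bar>d1 - d2\<bar> \<le> kk (M + m)" by (rule kk_mono)
      also have "\<dots> \<le> kk M + (phi + 1) * m" using kk_P3[of M "M + m"] m0 by simp
      also have "\<dots> \<le> kk M + kk m + 2" using kk_lb[of m] True by (simp add: algebra_simps)
      finally show ?thesis using sum by simp
    next
      case mlarge: False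
      have sg: "(d1 > 0 \<and> d2 < 0) \<or> (d1 < 0 \<and> d2 > 0)" using False mult_less_0_iff[of d1 d2] by linarith
      have "\<bar>d1 + d2 + 1\<bar> \<le> M - m + 1" using sg unfolding M_def m_def x_def y_def
        by (auto simp: max_def min_def)
      then have "kk \<bar>d1 + d2 + 1\<bar> \<le> kk (M - m + 1)" by (rule kk_mono)
      also have "\<dots> \<le> kk M - (phi - 1) * (m - 1)" using kk_P2[of "M - m + 1" M] mlarge
        by (simp add: algebra_simps)
      finally have "kk \<bar>d1 + d2 + 1\<bar> \<le> kk M - (phi - 1) * (m - 1)" .
      moreover have "kk m \<ge> (phi - 1) * m" by (rule kk_lb)
      moreover have "(phi - 1) * (m - 1) \<ge> 0" using mlarge phi_gt by simp
      ultimately show ?thesis using sum by (simp add: algebra_simps)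
    qed
  qed
qed

lemma key1: "kk \<bar>d - phi\<bar> \<le> kk \<bar>d\<bar> + 1 \<or> kk \<bar>d + phi + 1\<bar> \<le> kk \<bar>d\<bar> - phi"
proof (cases "d \<ge> - (phi + 1)")
  case True
  have kphi: "kk phi = 1" unfolding kk_def using phi_sq phi_gt by (simp add: algebra_simps max_def)
  show ?thesis
  proof (cases "d \<ge> 0")
    case d0: True
    show ?thesis
    proof (cases "d \<ge> phi")
      case True
      then have "kk \<bar>d - phi\<bar> \<le> kk \<bar>d\<bar>" using phi_gt by (intro kk_mono) auto
      then show ?thesis by simp
    next
      case False
      then have "kk \<bar>d - phi\<bar> \<le> kk phi" using phi_gt d0 by (intro kk_mono) auto
      moreover have "kk \<bar>d\<bar> \<ge> 0" by (rule kk_nonneg) simp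
      ultimately show ?thesis using kphi by simp
    qed
  next
    case False
    then have ab: "\<bar>d - phi\<bar> = phi - d" "\<bar>d\<bar> = - d" using phi_gt by auto
    have "kk (phi - d) = (phi - 1) * (phi - d)" unfolding kk_def using True
      by (simp add: max_def algebra_simps)
    also have "\<dots> = 1 + (phi - 1) * (- d)" using phi_sq by (simp add: algebra_simps)
    finally show ?thesis using ab kk_lb[of "-d"] by simp
  qed
next
  case False
  then have ab: "\<bar>d + phi + 1\<bar> = - d - phi - 1" "\<bar>d\<bar> = - d" using phi_gt by auto
  have "kk (- d) - kk (- d - phi - 1) \<ge> (phi - 1) * (phi + 1)"
  proof -
    have le: "- d - phi - 1 \<le> - d" using phi_gt by simp
    have "- d - (- d - phi - 1) = phi + 1" by simp
    then show ?thesis using kk_P2[OF le] by simp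
  qed
  moreover have "(phi - 1) * (phi + 1) = phi" using phi_sq by (simp add: algebra_simps)
  ultimately show ?thesis using ab by simp
qed

lemma key0: "gg (p + 1) q \<le> gg p q + phi + 1"
proof -
  have "\<bar>p + 1 - q\<bar> \<le> \<bar>p - q\<bar> + 1" by simp
  then have "kk \<bar>p + 1 - q\<bar> \<le> kk (\<bar>p - q\<bar> + 1)" by (rule kk_mono)
  also have "\<dots> \<le> kk \<bar>p - q\<bar> + (phi + 1)" using kk_P3[of "\<bar>p - q\<bar>" "\<bar>p - q\<bar> + 1"] by simp
  finally have "kk \<bar>p + 1 - q\<bar> \<le> kk \<bar>p - q\<bar> + (phi + 1)" .
  then show ?thesis unfolding gg_K by (simp add: field_simps; linarith)
qed

lemma real_merge:
  assumes "\<not> t1 \<Longrightarrow> a1 = phi \<and> b1 = 0" "\<not> t2 \<Longrightarrow> a2 = phi \<and> b2 = 0"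
  shows "\<exists>red. gg (if red then a1 + b2 else a1 + a2 + 1) (if red then b1 + a2 else b1 + b2)
     \<le> (if t1 then gg a1 b1 else 0) + (if t2 then gg a2 b2 else 0) + phi + 1"
proof (cases t1)
  case t1: True
  show ?thesis
  proof (cases t2)
    case True
    from key2[of "a1 - b1" "a2 - b2"] show ?thesis
    proof
      assume h: "kk \<bar>a1 - b1 - (a2 - b2)\<bar> \<le> kk \<bar>a1 - b1\<bar> + kk \<bar>a2 - b2\<bar> + 2"
      have "\<bar>a1 + b2 - (b1 + a2)\<bar> = \<bar>a1 - b1 - (a2 - b2)\<bar>" by (simp add: algebra_simps)
      note eq = this
      have "gg (a1 + b2) (b1 + a2) \<le> gg a1 b1 + gg a2 b2 + phi + 1"
        unfolding gg_K eq using h  by (simp add: field_simps; linarith)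
      then show ?thesis using t1 True by (intro exI[of _ True]) simp
    next
      assume h: "kk \<bar>a1 - b1 + (a2 - b2) + 1\<bar> + phi + 1 \<le> kk \<bar>a1 - b1\<bar> + kk \<bar>a2 - b2\<bar> + 2"
      have "\<bar>a1 + a2 + 1 - (b1 + b2)\<bar> = \<bar>a1 - b1 + (a2 - b2) + 1\<bar>" by (simp add: algebra_simps)
      note eq = this
      have "gg (a1 + a2 + 1) (b1 + b2) \<le> gg a1 b1 + gg a2 b2 + phi + 1"
        unfolding gg_K eq using h  by (simp add: field_simps; linarith)
      then show ?thesis using t1 True by (intro exI[of _ False]) simp
    qed
  next
    case False
    then have a2: "a2 = phi" "b2 = 0" using assms by auto
    from key1[of "a1 - b1"] show ?thesis
    proof
      assume h: "kk \<bar>a1 - b1 - phi\<bar> \<le> kk \<bar>a1 - b1\<bar> + 1"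
      have "\<bar>a1 + b2 - (b1 + a2)\<bar> = \<bar>a1 - b1 - phi\<bar>" using a2 by (simp add: algebra_simps)
      note eq = this
      have "gg (a1 + b2) (b1 + a2) \<le> gg a1 b1 + phi + 1"
        unfolding gg_K eq using h a2 phi_sq  by (simp add: field_simps; linarith)
      then show ?thesis using t1 False by (intro exI[of _ True]) simp
    next
      assume h: "kk \<bar>a1 - b1 + phi + 1\<bar> \<le> kk \<bar>a1 - b1\<bar> - phi"
      have "\<bar>a1 + a2 + 1 - (b1 + b2)\<bar> = \<bar>a1 - b1 + phi + 1\<bar>" using a2 by (simp add: algebra_simps)
      note eq = this
      have "gg (a1 + a2 + 1) (b1 + b2) \<le> gg a1 b1 + phi + 1"
        unfolding gg_K eq using h a2 phi_sq  by (simp add: field_simps; linarith)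
      then show ?thesis using t1 False by (intro exI[of _ False]) simp
    qed
  qed
next
  case t1: False
  then have a1: "a1 = phi" "b1 = 0" using assms by auto
  show ?thesis
  proof (cases t2)
    case True
    from key1[of "a2 - b2"] show ?thesis
    proof
      assume h: "kk \<bar>a2 - b2 - phi\<bar> \<le> kk \<bar>a2 - b2\<bar> + 1"
      have "\<bar>a1 + b2 - (b1 + a2)\<bar> = \<bar>a2 - b2 - phi\<bar>" using a1 by (simp add: algebra_simps)
      note eq = this
      have "gg (a1 + b2) (b1 + a2) \<le> gg a2 b2 + phi + 1"
        unfolding gg_K eq using h a1 phi_sq  by (simp add: field_simps; linarith)
      then show ?thesis using t1 True by (intro exI[of _ True]) simp
    next
      assume h: "kk \<bar>a2 - b2 + phi + 1\<bar> \<le> kk \<bar>a2 - b2\<bar> - phi"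
      have "\<bar>a1 + a2 + 1 - (b1 + b2)\<bar> = \<bar>a2 - b2 + phi + 1\<bar>" using a1 by (simp add: algebra_simps)
      note eq = this
      have "gg (a1 + a2 + 1) (b1 + b2) \<le> gg a2 b2 + phi + 1"
        unfolding gg_K eq using h a1 phi_sq  by (simp add: field_simps; linarith)
      then show ?thesis using t1 True by (intro exI[of _ False]) simp
    qed
  next
    case False
    then have a2: "a2 = phi" "b2 = 0" using assms by auto
    have "gg (a1 + b2) (b1 + a2) = phi + 1" unfolding gg_def using a1 a2 phi_sq phi_cube phi_gt
      by simp
    then show ?thesis using t1 False by (intro exI[of _ True]) simp
  qed
qed



definition two :: "nat set set \<Rightarrow> bool" where
  "two E \<longleftrightarrow> (\<forall>d\<in>E. \<exists>x y. x \<noteq> y \<and> d = {x, y})"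

lemma adj_sym: "adj E u v = adj E v u"
  unfolding adj_def by (simp add: insert_commute)

lemma rt_sym: "(adj E)\<^sup>*\<^sup>* u v \<Longrightarrow> (adj E)\<^sup>*\<^sup>* v u"
proof (induction rule: rtranclp_induct)
  case base then show ?case by simp
next
  case (step w z)
  have "adj E z w" using step(2) adj_sym by metis
  then show ?case using step(3) by (rule converse_rtranclp_into_rtranclp)
qed

lemma comp_self: "v \<in> comp E v"
  unfolding comp_def by simp

lemma comp_trans: "u \<in> comp E v \<Longrightarrow> comp E u = comp E v"
  unfolding comp_def using rt_sym rtranclp_trans by (metis (no_types, lifting) Collect_cong mem_Collect_eq)

lemma comp_disj: "comp E u \<noteq> comp E v \<Longrightarrow> comp E u \<inter> comp E v = {}"
  using comp_trans by blast

lemma edge_closed: "{p, q} \<in> E \<Longrightarrow> p \<in> comp E v \<Longrightarrow> q \<in> comp E v"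
  unfolding comp_def adj_def by (auto intro: rtranclp.rtrancl_into_rtrancl)

lemma two_edge: "two E \<Longrightarrow> d \<in> E \<Longrightarrow> \<exists>p q. p \<noteq> q \<and> d = {p, q}"
  unfolding two_def by blast

lemma edge_sub: assumes "two E" "d \<in> E" "w \<in> d" "w \<in> comp E v" shows "d \<subseteq> comp E v"
proof -
  obtain p q where pq: "d = {p, q}" using two_edge[OF assms(1,2)] by blast
  show ?thesis using assms(2-4) edge_closed[of p q E v] edge_closed[of q p E v] unfolding pq
    by (auto simp: insert_commute)
qed

lemma comp_sub: "comp E v \<subseteq> insert v (\<Union>E)"
proof
  fix u assume "u \<in> comp E v"
  then have "(adj E)\<^sup>*\<^sup>* v u" unfolding comp_def by simp
  then show "u \<in> insert v (\<Union>E)"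
    by (induction rule: rtranclp_induct) (auto simp: adj_def)
qed

lemma finite_union: "finite E \<Longrightarrow> two E \<Longrightarrow> finite (\<Union>E)"
  using two_edge by (metis finite.emptyI finite.insertI finite_Union)

lemma finite_comp: "finite E \<Longrightarrow> two E \<Longrightarrow> finite (comp E v)"
  using comp_sub finite_union by (meson finite.insertI finite_subset)

lemma triv_comp: assumes "\<forall>d\<in>E. v \<notin> d" shows "comp E v = {v}"
proof -
  have "u = v" if "(adj E)\<^sup>*\<^sup>* v u" for u
    using that
  proof (cases rule: converse_rtranclpE)
    case base then show ?thesis by simp
  next
    case (step z) then show ?thesis using assms unfolding adj_def by blast
  qed
  then show ?thesis unfolding comp_def by auto
qed

lemma nontriv_iff: "comp E v \<in> nontriv_comps E \<longleftrightarrow> (\<exists>d\<in>E. v \<in> d)"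
proof
  assume "comp E v \<in> nontriv_comps E"
  then obtain w d where w: "comp E v = comp E w" "d \<in> E" "w \<in> d" unfolding nontriv_comps_def by blast
  show "\<exists>d\<in>E. v \<in> d"
  proof (rule ccontr)
    assume "\<not> (\<exists>d\<in>E. v \<in> d)"
    then have "comp E v = {v}" using triv_comp by blast
    then have "w = v" using comp_self[of w E] w(1) by auto
    then show False using w \<open>\<not> (\<exists>d\<in>E. v \<in> d)\<close> by blast
  qed
qed (auto simp: nontriv_comps_def)

lemma finite_N: "finite E \<Longrightarrow> two E \<Longrightarrow> finite (nontriv_comps E)"
proof -
  assume a: "finite E" "two E"
  have "nontriv_comps E \<subseteq> (\<lambda>v. comp E v) ` (\<Union>E)" unfolding nontriv_comps_def by auto
  then show ?thesis using finite_union[OF a] finite_subset by blast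
qed

lemma card2: "p \<noteq> q \<Longrightarrow> (card ({p, q} \<inter> S) = 1) \<longleftrightarrow> ((p \<in> S) \<noteq> (q \<in> S))"
  by (cases "p \<in> S"; cases "q \<in> S") auto

lemma rb_iff: assumes "two E"
  shows "red_bip_on E R V \<longleftrightarrow> (\<forall>p q. {p, q} \<in> E \<longrightarrow> p \<noteq> q \<longrightarrow> ({p, q} \<in> R \<longleftrightarrow> ((p \<in> V) \<noteq> (q \<in> V))))"
  unfolding red_bip_on_def using two_edge[OF assms] card2 by metis

lemma two_edges_in: "two E \<Longrightarrow> two (edges_in E C)"
  unfolding two_def edges_in_def by auto

definition side :: "nat set \<Rightarrow> nat \<Rightarrow> nat set \<Rightarrow> nat set" where
  "side V x C = {u \<in> C. (u \<in> V) = (x \<in> V)}"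

lemma side_valid: assumes "two E" "red_bip_on E R V"
  shows "red_bip_on (edges_in E C) R (side V x C)"
proof -
  have "\<forall>p q. {p, q} \<in> E \<longrightarrow> p \<noteq> q \<longrightarrow> ({p, q} \<in> R \<longleftrightarrow> ((p \<in> V) \<noteq> (q \<in> V)))"
    using assms rb_iff by blast
  then show ?thesis unfolding rb_iff[OF two_edges_in[OF assms(1)]]
    unfolding edges_in_def side_def by auto
qed

lemma compl_valid: assumes "two E" "red_bip_on (edges_in E C) R W"
  shows "red_bip_on (edges_in E C) R (C - W)"
proof -
  have "\<forall>p q. {p, q} \<in> edges_in E C \<longrightarrow> p \<noteq> q \<longrightarrow> ({p, q} \<in> R \<longleftrightarrow> ((p \<in> W) \<noteq> (q \<in> W)))"
    using assms(2) rb_iff[OF two_edges_in[OF assms(1)]] by blast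
  then show ?thesis unfolding rb_iff[OF two_edges_in[OF assms(1)]] unfolding edges_in_def by auto
qed

lemma unique_bip:
  assumes "two E" "C = comp E v" "W \<subseteq> C" "W' \<subseteq> C"
    "red_bip_on (edges_in E C) R W" "red_bip_on (edges_in E C) R W'"
  shows "W' = W \<or> W' = C - W"
proof -
  have h: "\<forall>p q. {p, q} \<in> edges_in E C \<longrightarrow> p \<noteq> q \<longrightarrow> ({p, q} \<in> R \<longleftrightarrow> ((p \<in> W) \<noteq> (q \<in> W)))"
    "\<forall>p q. {p, q} \<in> edges_in E C \<longrightarrow> p \<noteq> q \<longrightarrow> ({p, q} \<in> R \<longleftrightarrow> ((p \<in> W') \<noteq> (q \<in> W')))"
    using assms(5,6) rb_iff[OF two_edges_in[OF assms(1)]] by blast+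
  have key: "((u \<in> W) = (u \<in> W')) = ((v \<in> W) = (v \<in> W'))" if "(adj E)\<^sup>*\<^sup>* v u" for u
    using that
  proof (induction rule: rtranclp_induct)
    case base then show ?case by simp
  next
    case (step u w)
    have e: "{u, w} \<in> E" using step(2) unfolding adj_def .
    have uC: "u \<in> C" using step(1) assms(2) unfolding comp_def by simp
    have wC: "w \<in> C" using edge_closed[OF e] uC assms(2) by simp
    have "u \<noteq> w" using two_edge[OF assms(1) e] by (metis doubleton_eq_iff insert_absorb2)
    moreover have "{u, w} \<in> edges_in E C" using e uC wC unfolding edges_in_def by auto
    ultimately have "((u \<in> W) \<noteq> (w \<in> W)) = ((u \<in> W') \<noteq> (w \<in> W'))" using h by blast
    then show ?case using step(3) by blast
  qed
  show ?thesis
  proof (cases "(v \<in> W) = (v \<in> W')")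
    case True
    then have "W' = W" using key assms(2,3,4) unfolding comp_def by blast
    then show ?thesis by simp
  next
    case False
    then have "W' = C - W" using key assms(2,3,4) unfolding comp_def by blast
    then show ?thesis by simp
  qed
qed

lemma gg_sym: "gg p q = gg q p"
  unfolding gg_def by (simp add: max.commute min.commute)

lemma cf_eval:
  assumes "two E" "C = comp E v" "W \<subseteq> C" "red_bip_on (edges_in E C) R W"
  shows "comp_f E R C = gg (pot E W) (pot E (C - W))"
proof -
  define V1 where "V1 = (SOME V1. V1 \<subseteq> C \<and> red_bip_on (edges_in E C) R V1)"
  have V1: "V1 \<subseteq> C \<and> red_bip_on (edges_in E C) R V1"
    unfolding V1_def by (rule someI[of _ W]) (use assms in auto)
  have cf: "comp_f E R C = gg (pot E V1) (pot E (C - V1))"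
    unfolding comp_f_def gg_def Let_def V1_def[symmetric] by simp
  from unique_bip[OF assms(1,2,3) conjunct1[OF V1] assms(4) conjunct2[OF V1]]
  show ?thesis
  proof
    assume "V1 = W" then show ?thesis using cf by simp
  next
    assume "V1 = C - W"
    moreover have "C - (C - W) = W" using assms(3) by auto
    ultimately show ?thesis using cf gg_sym by simp
  qed
qed

lemma cf_same:
  assumes "edges_in E' C = edges_in E C" "\<And>V. V \<subseteq> C \<Longrightarrow> pot E' V = pot E V"
    "\<And>d. d \<in> edges_in E C \<Longrightarrow> d \<in> R' \<longleftrightarrow> d \<in> R"
    "W \<subseteq> C" "red_bip_on (edges_in E C) R W"
  shows "comp_f E' R' C = comp_f E R C"
proof -
  have P: "(\<lambda>V1. V1 \<subseteq> C \<and> red_bip_on (edges_in E' C) R' V1) = (\<lambda>V1. V1 \<subseteq> C \<and> red_bip_on (edges_in E C) R V1)"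
    using assms(1,3) unfolding red_bip_on_def by auto
  define V1 where "V1 = (SOME V1. V1 \<subseteq> C \<and> red_bip_on (edges_in E C) R V1)"
  have V1: "V1 \<subseteq> C \<and> red_bip_on (edges_in E C) R V1"
    unfolding V1_def by (rule someI[of _ W]) (use assms in auto)
  show ?thesis
    unfolding comp_f_def Let_def P V1_def[symmetric] using V1 assms(2)[of V1] assms(2)[of "C - V1"] by auto
qed

lemma pot_ins: assumes "finite E" "e \<notin> E"
  shows "pot (insert e E) S = pot E S + (if e \<subseteq> S then 1 else 0)"
proof -
  have fin: "finite (edges_in E S)" using assms(1) unfolding edges_in_def by simp
  show ?thesis
  proof (cases "e \<subseteq> S")
    case True
    then have "edges_in (insert e E) S = insert e (edges_in E S)" unfolding edges_in_def by auto
    moreover have "e \<notin> edges_in E S" using assms(2) unfolding edges_in_def by auto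
    ultimately show ?thesis using True fin unfolding pot_def by simp
  next
    case False
    then have "edges_in (insert e E) S = edges_in E S" unfolding edges_in_def by auto
    then show ?thesis using False unfolding pot_def by simp
  qed
qed



lemma comp_mono: "E \<subseteq> E' \<Longrightarrow> comp E v \<subseteq> comp E' v"
proof
  fix u assume "E \<subseteq> E'" "u \<in> comp E v"
  have "adj E \<le> adj E'" using \<open>E \<subseteq> E'\<close> unfolding adj_def by auto
  then show "u \<in> comp E' v" using \<open>u \<in> comp E v\<close> unfolding comp_def
    by (metis mem_Collect_eq rtranclp_mono predicate2D)
qed

lemma rt_ins: "(adj (insert {x, y} E))\<^sup>*\<^sup>* v u \<Longrightarrow>
   (adj E)\<^sup>*\<^sup>* v u \<or> ((x \<in> comp E v \<or> y \<in> comp E v) \<and> u \<in> comp E x \<union> comp E y)"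
proof (induction rule: rtranclp_induct)
  case base then show ?case by simp
next
  case (step u w)
  have "{u, w} = {x, y} \<or> {u, w} \<in> E" using step(2) unfolding adj_def by simp
  then show ?case
  proof
    assume uw: "{u, w} = {x, y}"
    then have "u \<in> {x, y}" "w \<in> {x, y}" by (metis insertI1 insert_commute)+
    then have w: "w \<in> comp E x \<union> comp E y" using comp_self by auto
    from step(3) show ?case
    proof
      assume "(adj E)\<^sup>*\<^sup>* v u"
      then have "u \<in> comp E v" unfolding comp_def by simp
      then show ?case using \<open>u \<in> {x, y}\<close> w by auto
    qed (use w in auto)
  next
    assume e: "{u, w} \<in> E"
    from step(3) show ?case
    proof
      assume "(adj E)\<^sup>*\<^sup>* v u"
      then have "(adj E)\<^sup>*\<^sup>* v w" using e unfolding adj_def by (auto intro: rtranclp.rtrancl_into_rtrancl)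
      then show ?case by simp
    next
      assume "(x \<in> comp E v \<or> y \<in> comp E v) \<and> u \<in> comp E x \<union> comp E y"
      then show ?case using edge_closed[OF e] by blast
    qed
  qed
qed

lemma comp_ins: "comp (insert {x, y} E) v =
   (if x \<in> comp E v \<or> y \<in> comp E v then comp E x \<union> comp E y else comp E v)"
proof -
  let ?E' = "insert {x, y} E"
  have sub: "comp (insert {x, y} E) v \<subseteq> (if x \<in> comp E v \<or> y \<in> comp E v then comp E x \<union> comp E y else comp E v)"
  proof
    fix u assume "u \<in> comp ?E' v"
    then have "(adj E)\<^sup>*\<^sup>* v u \<or> ((x \<in> comp E v \<or> y \<in> comp E v) \<and> u \<in> comp E x \<union> comp E y)"
      using rt_ins unfolding comp_def by simp
    then show "u \<in> (if x \<in> comp E v \<or> y \<in> comp E v then comp E x \<union> comp E y else comp E v)"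
    proof
      assume "(adj E)\<^sup>*\<^sup>* v u"
      then have u: "u \<in> comp E v" unfolding comp_def by simp
      show ?thesis
      proof (cases "x \<in> comp E v \<or> y \<in> comp E v")
        case True
        then have "comp E x = comp E v \<or> comp E y = comp E v" using comp_trans by blast
        then show ?thesis using u True by auto
      qed (use u in simp)
    qed simp
  qed
  have m: "comp E w \<subseteq> comp ?E' w" for w by (rule comp_mono) auto
  have xy: "y \<in> comp ?E' x" using edge_closed[of x y ?E' x] comp_self by auto
  have sup: "comp E x \<union> comp E y \<subseteq> comp ?E' v" if "x \<in> comp E v \<or> y \<in> comp E v"
  proof -
    have "x \<in> comp ?E' v \<or> y \<in> comp ?E' v" using that m by blast
    then have "comp ?E' x = comp ?E' v \<or> comp ?E' y = comp ?E' v" using comp_trans by metis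
    moreover have "comp ?E' y = comp ?E' x" using comp_trans[OF xy] .
    ultimately have "comp ?E' x = comp ?E' v" "comp ?E' y = comp ?E' v" by auto
    then show ?thesis using m[of x] m[of y] by auto
  qed
  show ?thesis using sub sup m[of v] by (auto split: if_splits)
qed

lemma N_ins:
  fixes x y :: nat and E :: "nat set set"
  defines "C0 \<equiv> comp E x \<union> comp E y"
  shows "nontriv_comps (insert {x, y} E) = insert C0 (nontriv_comps E - {comp E x, comp E y})"
    and "C0 \<notin> nontriv_comps E - {comp E x, comp E y}"
proof -
  let ?E' = "insert {x, y} E"
  have c0: "comp ?E' x = C0" unfolding comp_ins C0_def using comp_self by auto
  have other: "comp ?E' v = comp E v" if "comp E v \<in> nontriv_comps E - {comp E x, comp E y}" for v
  proof -
    have "x \<notin> comp E v" using that comp_trans[of x E v] by auto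
    moreover have "y \<notin> comp E v" using that comp_trans[of y E v] by auto
    ultimately show ?thesis unfolding comp_ins by simp
  qed
  show "nontriv_comps ?E' = insert C0 (nontriv_comps E - {comp E x, comp E y})"
  proof
    show "nontriv_comps ?E' \<subseteq> insert C0 (nontriv_comps E - {comp E x, comp E y})"
    proof
      fix C assume "C \<in> nontriv_comps ?E'"
      then obtain v d where v: "C = comp ?E' v" "d \<in> ?E'" "v \<in> d" unfolding nontriv_comps_def by blast
      show "C \<in> insert C0 (nontriv_comps E - {comp E x, comp E y})"
      proof (cases "x \<in> comp E v \<or> y \<in> comp E v")
        case True
        then show ?thesis using v(1) unfolding comp_ins C0_def by simp
      next
        case False
        then have "d \<noteq> {x, y}" using v(3) comp_self[of v E] by auto
        then have "d \<in> E" using v(2) by simp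
        then have "comp E v \<in> nontriv_comps E" using v(3) unfolding nontriv_comps_def by blast
        moreover have "comp E v \<noteq> comp E x" "comp E v \<noteq> comp E y" using False comp_self[of x E] comp_self[of y E] by auto
        ultimately show ?thesis using v(1) False unfolding comp_ins by simp
      qed
    qed
  next
    show "insert C0 (nontriv_comps E - {comp E x, comp E y}) \<subseteq> nontriv_comps ?E'"
    proof
      fix C assume C: "C \<in> insert C0 (nontriv_comps E - {comp E x, comp E y})"
      show "C \<in> nontriv_comps ?E'"
      proof (cases "C = C0")
        case True
        then show ?thesis using c0 unfolding nontriv_comps_def by blast
      next
        case False
        then have C1: "C \<in> nontriv_comps E - {comp E x, comp E y}" using C by simp
        then obtain v d where v: "C = comp E v" "d \<in> E" "v \<in> d" unfolding nontriv_comps_def by blast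
        then have "comp ?E' v = C" using other C1 by simp
        then show ?thesis using v unfolding nontriv_comps_def by blast
      qed
    qed
  qed
  show "C0 \<notin> nontriv_comps E - {comp E x, comp E y}"
  proof
    assume "C0 \<in> nontriv_comps E - {comp E x, comp E y}"
    then obtain v where v: "C0 = comp E v" "C0 \<notin> {comp E x, comp E y}" unfolding nontriv_comps_def by blast
    have "x \<in> comp E v" using v(1) comp_self unfolding C0_def by blast
    then show False using comp_trans[of x E v] v by auto
  qed
qed

lemma restr_valid: "red_bip_on E R V \<Longrightarrow> red_bip_on (edges_in E C) R (V \<inter> C)"
  unfolding red_bip_on_def edges_in_def
proof clarify
  fix d assume a: "\<forall>e\<in>E. (e \<in> R) = (card (e \<inter> V) = 1)" "d \<in> E" "d \<subseteq> C"
  have "d \<inter> (V \<inter> C) = d \<inter> V" using a(3) by blast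
  then show "(d \<in> R) = (card (d \<inter> (V \<inter> C)) = 1)" using a by simp
qed

lemma pot_split:
  assumes "finite E" "two E" "Cx = comp E x" "Cy = comp E y" "Cx \<inter> Cy = {}" "S \<subseteq> Cx \<union> Cy"
  shows "pot E S = pot E (S \<inter> Cx) + pot E (S \<inter> Cy)"
proof -
  have fx: "finite Cx" "finite Cy" using finite_comp assms by auto
  have "S = (S \<inter> Cx) \<union> (S \<inter> Cy)" using assms(6) by blast
  moreover have "(S \<inter> Cx) \<inter> (S \<inter> Cy) = {}" using assms(5) by blast
  ultimately have c: "card S = card (S \<inter> Cx) + card (S \<inter> Cy)"
    using fx by (metis card_Un_disjoint finite_Int)
  have ed: "edges_in E S = edges_in E (S \<inter> Cx) \<union> edges_in E (S \<inter> Cy)"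
  proof
    show "edges_in E S \<subseteq> edges_in E (S \<inter> Cx) \<union> edges_in E (S \<inter> Cy)"
    proof
      fix d assume d: "d \<in> edges_in E S"
      then have dE: "d \<in> E" "d \<subseteq> S" unfolding edges_in_def by auto
      obtain p q where pq: "p \<noteq> q" "d = {p, q}" using two_edge[OF assms(2) dE(1)] by blast
      have "p \<in> Cx \<or> p \<in> Cy" using dE(2) pq assms(6) by auto
      then have "d \<subseteq> Cx \<or> d \<subseteq> Cy" using edge_sub[OF assms(2) dE(1), of p] pq assms(3,4) by auto
      then show "d \<in> edges_in E (S \<inter> Cx) \<union> edges_in E (S \<inter> Cy)" using dE unfolding edges_in_def by auto
    qed
  qed (auto simp: edges_in_def)
  have dis: "edges_in E (S \<inter> Cx) \<inter> edges_in E (S \<inter> Cy) = {}"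
  proof -
    have "d = {}" if "d \<in> E" "d \<subseteq> Cx" "d \<subseteq> Cy" for d using that assms(5) by blast
    moreover have "d \<noteq> {}" if "d \<in> E" for d using two_edge[OF assms(2) that] by auto
    ultimately show ?thesis unfolding edges_in_def by blast
  qed
  have fe: "finite (edges_in E T)" for T using assms(1) unfolding edges_in_def by simp
  have "card (edges_in E S) = card (edges_in E (S \<inter> Cx)) + card (edges_in E (S \<inter> Cy))"
    unfolding ed using card_Un_disjoint[OF fe fe dis] .
  then show ?thesis unfolding pot_def using c by (simp add: algebra_simps)
qed



lemma pot_single: "two E \<Longrightarrow> pot E {x} = phi"
proof -
  assume t: "two E"
  have "edges_in E {x} = {}"
  proof -
    have "\<not> d \<subseteq> {x}" if "d \<in> E" for d using two_edge[OF t that] by auto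
    then show ?thesis unfolding edges_in_def by auto
  qed
  then show ?thesis unfolding pot_def by simp
qed

lemma pot_empty: "two E \<Longrightarrow> pot E {} = 0"
proof -
  assume t: "two E"
  have "edges_in E {} = {}"
  proof -
    have "d \<noteq> {}" if "d \<in> E" for d using two_edge[OF t that] by auto
    then show ?thesis unfolding edges_in_def by auto
  qed
  then show ?thesis unfolding pot_def by simp
qed

lemma side_sub: "side V x C \<subseteq> C" unfolding side_def by auto
lemma side_mem: "x \<in> C \<Longrightarrow> x \<in> side V x C" unfolding side_def by auto

theorem lemma1:
  fixes E R :: "nat set set" and e :: "nat set"
  assumes "finite E"
    and "\<forall>d\<in>E. \<exists>x y. x \<noteq> y \<and> d = {x, y}"
    and "R \<subseteq> E"
    and "red_bipartite E R"
    and "\<exists>x y. x \<noteq> y \<and> e = {x, y}"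
    and "e \<notin> E"
  shows "\<exists>red::bool. red_bipartite (insert e E) (if red then insert e R else R)
           \<and> f (insert e E) (if red then insert e R else R) \<le> f E R + phi + 1"
proof -
  obtain x y where xy: "x \<noteq> y" "e = {x, y}" using assms(5) by blast
  have two: "two E" using assms(2) unfolding two_def .
  obtain V1 where V1: "red_bip_on E R V1" using assms(4) unfolding red_bipartite_def by blast
  define E' where "E' = insert e E"
  define Rr where "Rr = (\<lambda>red::bool. if red then insert e R else R)"
  have two': "two E'" using two xy unfolding two_def E'_def by auto
  have eR: "e \<notin> R" using assms(3,6) by blast
  have fin': "finite E'" using assms(1) unfolding E'_def by simp
  define Cx where "Cx = comp E x"
  define Cy where "Cy = comp E y"
  define C0 where "C0 = Cx \<union> Cy"
  define N where "N = nontriv_comps E"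
  define N0 where "N0 = N - {Cx, Cy}"
  have N'_eq: "nontriv_comps E' = insert C0 N0" and C0N0: "C0 \<notin> N0"
    using N_ins[where x=x and y=y and E=E] unfolding E'_def xy(2) C0_def N0_def N_def Cx_def Cy_def by simp_all
  have finN: "finite N" using finite_N[OF assms(1) two] unfolding N_def .
  have finN0: "finite N0" using finN unfolding N0_def by simp
  have V1r: "\<forall>p q. {p, q} \<in> E \<longrightarrow> p \<noteq> q \<longrightarrow> ({p, q} \<in> R \<longleftrightarrow> ((p \<in> V1) \<noteq> (q \<in> V1)))"
    using V1 rb_iff[OF two] by blast
  have RrE: "d \<in> Rr red \<longleftrightarrow> d \<in> R" if "d \<in> E" for d red
    using that assms(6) unfolding Rr_def by auto
  have Rre: "e \<in> Rr red \<longleftrightarrow> red" for red using eR unfolding Rr_def by auto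
  have rest: "(\<Sum>C\<in>N0. comp_f E' (Rr red) C) = (\<Sum>C\<in>N0. comp_f E R C)" for red
  proof (rule sum.cong)
    fix C assume C: "C \<in> N0"
    then obtain v where v: "C = comp E v" unfolding N0_def N_def nontriv_comps_def by blast
    have "x \<notin> C" using C comp_trans[of x E v] unfolding v N0_def Cx_def by auto
    then have ne: "\<not> e \<subseteq> V" if "V \<subseteq> C" for V using that xy(2) by auto
    show "comp_f E' (Rr red) C = comp_f E R C"
    proof (rule cf_same)
      show "edges_in E' C = edges_in E C" using ne[of C] unfolding E'_def edges_in_def by auto
      show "pot E' V = pot E V" if "V \<subseteq> C" for V
        using pot_ins[OF assms(1,6), of V] ne[OF that] unfolding E'_def by simp
      show "d \<in> Rr red \<longleftrightarrow> d \<in> R" if "d \<in> edges_in E C" for d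
        using RrE that unfolding edges_in_def by auto
      show "V1 \<inter> C \<subseteq> C" by simp
      show "red_bip_on (edges_in E C) R (V1 \<inter> C)" using restr_valid[OF V1] .
    qed
  qed simp
  have fE': "f E' (Rr red) = comp_f E' (Rr red) C0 + (\<Sum>C\<in>N0. comp_f E R C)" for red
    unfolding f_def N'_eq sum.insert[OF finN0 C0N0] rest ..
  have fE: "f E R = (\<Sum>C\<in>N0. comp_f E R C) + (\<Sum>C\<in>N \<inter> {Cx, Cy}. comp_f E R C)"
    unfolding f_def N_def[symmetric] N0_def using sum.Int_Diff[OF finN, of _ "{Cx, Cy}"] by (simp add: add.commute)
  have C0x: "comp E' x = C0"
    unfolding E'_def xy(2) comp_ins C0_def Cx_def Cy_def using comp_self[of x E] by simp
  have xCx: "x \<in> Cx" "y \<in> Cy" unfolding Cx_def Cy_def by (rule comp_self)+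
  have suff: "\<exists>red. red_bipartite E' (Rr red) \<and>
       comp_f E' (Rr red) C0 \<le> (\<Sum>C\<in>N \<inter> {Cx, Cy}. comp_f E R C) + phi + 1"
  proof (cases "y \<in> Cx")
    case True
    have CyCx: "Cy = Cx" unfolding Cy_def using comp_trans True unfolding Cx_def by blast
    have C0Cx: "C0 = Cx" unfolding C0_def CyCx by simp
    have "\<exists>d\<in>E. x \<in> d"
    proof -
      have "(adj E)\<^sup>*\<^sup>* x y" using True unfolding Cx_def comp_def by simp
      then show ?thesis
      proof (cases rule: converse_rtranclpE)
        case base then show ?thesis using xy(1) by simp
      next
        case (step z) then show ?thesis unfolding adj_def by blast
      qed
    qed
    then have CxN: "Cx \<in> N" unfolding N_def Cx_def using nontriv_iff by blast
    have sumN: "(\<Sum>C\<in>N \<inter> {Cx, Cy}. comp_f E R C) = comp_f E R Cx"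
    proof -
      have "N \<inter> {Cx, Cy} = {Cx}" using CxN CyCx by auto
      then show ?thesis by simp
    qed
    define red where "red = ((x \<in> V1) \<noteq> (y \<in> V1))"
    have valid: "red_bip_on E' (Rr red) V1"
      unfolding rb_iff[OF two']
    proof (intro allI impI)
      fix p q assume pq: "{p, q} \<in> E'" "p \<noteq> q"
      show "({p, q} \<in> Rr red) = ((p \<in> V1) \<noteq> (q \<in> V1))"
      proof (cases "{p, q} = e")
        case True
        then have "(p = x \<and> q = y) \<or> (p = y \<and> q = x)" using xy(2) by (simp add: doubleton_eq_iff)
        then show ?thesis using Rre[of red] True unfolding red_def by auto
      next
        case False
        then have "{p, q} \<in> E" using pq(1) unfolding E'_def by simp
        then show ?thesis using RrE V1r pq(2) by blast
      qed
    qed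
    define Ax where "Ax = side V1 x Cx"
    have AxC: "Ax \<subseteq> Cx" unfolding Ax_def by (rule side_sub)
    have xAx: "x \<in> Ax" unfolding Ax_def using xCx(1) by (rule side_mem)
    have cf1: "comp_f E' (Rr red) C0 = gg (pot E' Ax) (pot E' (Cx - Ax))"
    proof -
      have "red_bip_on (edges_in E' C0) (Rr red) (side V1 x C0)" by (rule side_valid[OF two' valid])
      then show ?thesis using cf_eval[OF two' C0x[symmetric], of Ax "Rr red"] AxC
        unfolding C0Cx Ax_def by simp
    qed
    have cf0: "comp_f E R Cx = gg (pot E Ax) (pot E (Cx - Ax))"
      using cf_eval[OF two Cx_def AxC] side_valid[OF two V1] unfolding Ax_def by simp
    have p2: "pot E' (Cx - Ax) = pot E (Cx - Ax)"
      using pot_ins[OF assms(1,6), of "Cx - Ax"] xAx xy(2) unfolding E'_def by auto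
    have p1: "pot E' Ax = pot E Ax + (if e \<subseteq> Ax then 1 else 0)"
      using pot_ins[OF assms(1,6), of Ax] unfolding E'_def by simp
    have "comp_f E' (Rr red) C0 \<le> comp_f E R Cx + phi + 1"
    proof (cases "e \<subseteq> Ax")
      case True
      then show ?thesis unfolding cf1 cf0 p1 p2 using key0 by simp
    next
      case False
      then show ?thesis unfolding cf1 cf0 p1 p2 using phi_gt by simp
    qed
    then show ?thesis using valid sumN unfolding red_bipartite_def by auto
  next
    case False
    have CxCy: "Cx \<noteq> Cy" using False xCx by auto
    have disj: "Cx \<inter> Cy = {}" using comp_disj[of E x y] CxCy unfolding Cx_def Cy_def by simp
    define t1 where "t1 = (\<exists>d\<in>E. x \<in> d)"
    define t2 where "t2 = (\<exists>d\<in>E. y \<in> d)"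
    define Ax where "Ax = side V1 x Cx"
    define Bx where "Bx = Cx - Ax"
    define Ay where "Ay = side V1 y Cy"
    define By where "By = Cy - Ay"
    have AxC: "Ax \<subseteq> Cx" unfolding Ax_def by (rule side_sub)
    have AyC: "Ay \<subseteq> Cy" unfolding Ay_def by (rule side_sub)
    have xAx: "x \<in> Ax" unfolding Ax_def using xCx(1) by (rule side_mem)
    have yAy: "y \<in> Ay" unfolding Ay_def using xCx(2) by (rule side_mem)
    have vAx: "red_bip_on (edges_in E Cx) R Ax" unfolding Ax_def by (rule side_valid[OF two V1])
    have vAy: "red_bip_on (edges_in E Cy) R Ay" unfolding Ay_def by (rule side_valid[OF two V1])
    have cfx: "comp_f E R Cx = gg (pot E Ax) (pot E Bx)"
      using cf_eval[OF two Cx_def AxC vAx] unfolding Bx_def .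
    have cfy: "comp_f E R Cy = gg (pot E Ay) (pot E By)"
      using cf_eval[OF two Cy_def AyC vAy] unfolding By_def .
    have trx: "pot E Ax = phi \<and> pot E Bx = 0" if "\<not> t1"
    proof -
      have "Cx = {x}" unfolding Cx_def using triv_comp that unfolding t1_def by blast
      then have "Ax = {x}" "Bx = {}" using AxC xAx unfolding Bx_def by auto
      then show ?thesis using pot_single[OF two] pot_empty[OF two] by simp
    qed
    have tyy: "pot E Ay = phi \<and> pot E By = 0" if "\<not> t2"
    proof -
      have "Cy = {y}" unfolding Cy_def using triv_comp that unfolding t2_def by blast
      then have "Ay = {y}" "By = {}" using AyC yAy unfolding By_def by auto
      then show ?thesis using pot_single[OF two] pot_empty[OF two] by simp
    qed
    have CxN: "Cx \<in> N \<longleftrightarrow> t1" unfolding N_def Cx_def t1_def by (rule nontriv_iff)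
    have CyN: "Cy \<in> N \<longleftrightarrow> t2" unfolding N_def Cy_def t2_def by (rule nontriv_iff)
    have sumN: "(\<Sum>C\<in>N \<inter> {Cx, Cy}. comp_f E R C) =
       (if t1 then gg (pot E Ax) (pot E Bx) else 0) + (if t2 then gg (pot E Ay) (pot E By) else 0)"
    proof (cases t1; cases t2)
      assume "t1" "t2"
      then have "N \<inter> {Cx, Cy} = {Cx, Cy}" using CxN CyN by auto
      then show ?thesis using CxCy cfx cfy \<open>t1\<close> \<open>t2\<close> by simp
    next
      assume "t1" "\<not> t2"
      then have "N \<inter> {Cx, Cy} = {Cx}" using CxN CyN by auto
      then show ?thesis using cfx \<open>t1\<close> \<open>\<not> t2\<close> by simp
    next
      assume "\<not> t1" "t2"
      then have "N \<inter> {Cx, Cy} = {Cy}" using CxN CyN by auto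
      then show ?thesis using cfy \<open>\<not> t1\<close> \<open>t2\<close> by simp
    next
      assume "\<not> t1" "\<not> t2"
      then have "N \<inter> {Cx, Cy} = {}" using CxN CyN by auto
      then show ?thesis using \<open>\<not> t1\<close> \<open>\<not> t2\<close> by simp
    qed
    obtain red where red: "gg (if red then pot E Ax + pot E By else pot E Ax + pot E Ay + 1)
        (if red then pot E Bx + pot E Ay else pot E Bx + pot E By)
       \<le> (if t1 then gg (pot E Ax) (pot E Bx) else 0) + (if t2 then gg (pot E Ay) (pot E By) else 0) + phi + 1"
      using real_merge[of t1 "pot E Ax" "pot E Bx" t2 "pot E Ay" "pot E By"] trx tyy by blast
    define Y where "Y = (if red then By else Ay)"
    define W where "W = Ax \<union> Y"
    define V' where "V' = W \<union> (V1 - C0)"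
    have YC: "Y \<subseteq> Cy" using AyC unfolding Y_def By_def by auto
    have memV': "u \<in> V' \<longleftrightarrow> (if u \<in> Cx then (u \<in> V1) = (x \<in> V1)
        else if u \<in> Cy then (((u \<in> V1) = (y \<in> V1)) \<noteq> red) else u \<in> V1)" for u
      using disj unfolding V'_def W_def Y_def C0_def By_def Ay_def Ax_def side_def by auto
    have valid: "red_bip_on E' (Rr red) V'"
      unfolding rb_iff[OF two']
    proof (intro allI impI)
      fix p q assume pq: "{p, q} \<in> E'" "p \<noteq> q"
      show "({p, q} \<in> Rr red) = ((p \<in> V') \<noteq> (q \<in> V'))"
      proof (cases "{p, q} = e")
        case True
        then have "(p = x \<and> q = y) \<or> (p = y \<and> q = x)" using xy(2) by (simp add: doubleton_eq_iff)
        then show ?thesis using Rre[of red] True memV'[of x] memV'[of y] xCx False by auto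
      next
        case False
        then have pqE: "{p, q} \<in> E" using pq(1) unfolding E'_def by simp
        have qpE: "{q, p} \<in> E" using pqE by (simp add: insert_commute)
        have cx: "p \<in> Cx \<longleftrightarrow> q \<in> Cx" using edge_closed[OF pqE] edge_closed[OF qpE] unfolding Cx_def by blast
        have cy: "p \<in> Cy \<longleftrightarrow> q \<in> Cy" using edge_closed[OF pqE] edge_closed[OF qpE] unfolding Cy_def by blast
        have r: "({p, q} \<in> Rr red) = ((p \<in> V1) \<noteq> (q \<in> V1))" using RrE[OF pqE] V1r pqE pq(2) by blast
        show ?thesis unfolding r using memV'[of p] memV'[of q] cx cy by auto
      qed
    qed
    have WC0: "W \<subseteq> C0" using AxC YC unfolding W_def C0_def by auto
    have sideW: "side V' x C0 = W"
      using WC0 memV'[of x] xCx(1) unfolding side_def V'_def by auto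
    have cfC0: "comp_f E' (Rr red) C0 = gg (pot E' W) (pot E' (C0 - W))"
      using cf_eval[OF two' C0x[symmetric] WC0] side_valid[OF two' valid, where x=x and C=C0] unfolding sideW by simp
    have yW: "y \<in> W \<longleftrightarrow> \<not> red" using yAy False AxC unfolding W_def Y_def By_def by auto
    have pW: "pot E' W = pot E Ax + pot E Y + (if red then 0 else 1)"
    proof -
      have "pot E' W = pot E W + (if e \<subseteq> W then 1 else 0)"
        using pot_ins[OF assms(1,6)] unfolding E'_def by simp
      moreover have "e \<subseteq> W \<longleftrightarrow> \<not> red" using yW xAx xy(2) unfolding W_def by auto
      moreover have "pot E W = pot E (W \<inter> Cx) + pot E (W \<inter> Cy)"
        using pot_split[OF assms(1) two Cx_def Cy_def disj] WC0 unfolding C0_def by simp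
      moreover have "W \<inter> Cx = Ax" "W \<inter> Cy = Y" using AxC YC disj unfolding W_def by auto
      ultimately show ?thesis by simp
    qed
    have pW': "pot E' (C0 - W) = pot E Bx + pot E (Cy - Y)"
    proof -
      have "pot E' (C0 - W) = pot E (C0 - W)"
        using pot_ins[OF assms(1,6)] xAx xy(2) unfolding E'_def W_def by auto
      moreover have "pot E (C0 - W) = pot E ((C0 - W) \<inter> Cx) + pot E ((C0 - W) \<inter> Cy)"
        using pot_split[OF assms(1) two Cx_def Cy_def disj] unfolding C0_def by auto
      moreover have "(C0 - W) \<inter> Cx = Bx" "(C0 - W) \<inter> Cy = Cy - Y"
        using AxC YC disj unfolding W_def C0_def Bx_def by auto
      ultimately show ?thesis by simp
    qed
    have CyY: "Cy - Y = (if red then Ay else By)" using AyC unfolding Y_def By_def by auto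
    have "comp_f E' (Rr red) C0 = gg (if red then pot E Ax + pot E By else pot E Ax + pot E Ay + 1)
        (if red then pot E Bx + pot E Ay else pot E Bx + pot E By)"
      unfolding cfC0 pW pW' CyY by (simp add: Y_def)
    then show ?thesis using red sumN valid unfolding red_bipartite_def by auto
  qed
  then obtain red where "red_bipartite E' (Rr red)"
      "comp_f E' (Rr red) C0 \<le> (\<Sum>C\<in>N \<inter> {Cx, Cy}. comp_f E R C) + phi + 1" by blast
  then have "red_bipartite E' (Rr red) \<and> f E' (Rr red) \<le> f E R + phi + 1"
    unfolding fE fE' by simp
  then show ?thesis unfolding E'_def Rr_def by blast
qed

end
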